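(* There exist graphs $G$ and $H$ with the same dominated chromatic number for which $|St_{dom}(G)-St_{dom}(H)|$ is arbitrarily large; that is, for every positive integer $N$ there exist graphs $G,H$ with $\chi_{dom}(G)=\chi_{dom}(H)$ and $|St_{dom}(G)-St_{dom}(H)|\ge N$.
   Context: A dominated coloring of a graph is a proper coloring in which every color class is dominated by at least one vertex, i.e. for each color class $C$ there is a vertex adjacent to every vertex of $C$; $\chi_{dom}(G)$ is the minimum number of colors in a dominated coloring. The dom-stability $St_{dom}(G)$ is the minimum number of vertices of $G$ whose removal changes the dominated chromatic number of $G$. *)

theory Defs
  imports Main
begin

definition graph :: "'a set \<Rightarrow> ('a \<times> 'a) set \<Rightarrow> bool" where
  "graph V E \<longleftrightarrow> finite V \<and> E \<subseteq> V \<times> V \<and> sym E \<and> irrefl E"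

definition proper_coloring :: "'a set \<Rightarrow> ('a \<times> 'a) set \<Rightarrow> ('a \<Rightarrow> nat) \<Rightarrow> nat \<Rightarrow> bool" where
  "proper_coloring V E c k \<longleftrightarrow> c ` V \<subseteq> {..<k} \<and> (\<forall>(u,v)\<in>E. c u \<noteq> c v)"

definition dominated_coloring :: "'a set \<Rightarrow> ('a \<times> 'a) set \<Rightarrow> ('a \<Rightarrow> nat) \<Rightarrow> nat \<Rightarrow> bool" where
  "dominated_coloring V E c k \<longleftrightarrow> proper_coloring V E c k \<and>
     (\<forall>i\<in>c ` V. \<exists>w\<in>V. \<forall>v\<in>V. c v = i \<longrightarrow> (w, v) \<in> E)"

definition dom_colorable :: "'a set \<Rightarrow> ('a \<times> 'a) set \<Rightarrow> bool" where
  "dom_colorable V E \<longleftrightarrow> (\<exists>c k. dominated_coloring V E c k)"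

text \<open>Dominated chromatic number (meaningful when dom_colorable, i.e. no isolated vertices).\<close>
definition chi_dom :: "'a set \<Rightarrow> ('a \<times> 'a) set \<Rightarrow> nat" where
  "chi_dom V E = (LEAST k. \<exists>c. dominated_coloring V E c k)"

definition del_vertices :: "'a set \<Rightarrow> ('a \<times> 'a) set \<Rightarrow> 'a set \<Rightarrow> 'a set \<times> ('a \<times> 'a) set" where
  "del_vertices V E S = (V - S, E \<inter> ((V - S) \<times> (V - S)))"

text \<open>Dom-stability: minimum number of vertices whose removal yields a graph
whose dominated chromatic number (exists and) differs from that of G.
Deleting all vertices always qualifies when chi_dom G > 0.\<close>
definition St_dom :: "'a set \<Rightarrow> ('a \<times> 'a) set \<Rightarrow> nat" where
  "St_dom V E = (LEAST n. \<exists>S. S \<subseteq> V \<and> card S = n \<and>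
      dom_colorable (V - S) (E \<inter> ((V - S) \<times> (V - S))) \<and>
      chi_dom (V - S) (E \<inter> ((V - S) \<times> (V - S))) \<noteq> chi_dom V E)"

end

theory Submission
  imports Defs
begin

definition starE :: "nat \<Rightarrow> (nat \<times> nat) set" where
  "starE n = {(0,i)| i. i \<in> {1..n}} \<union> {(i,0)| i. i \<in> {1..n}}"

lemma dc_edge:
  assumes "dom_colorable V E" "v \<in> V"
  shows "\<exists>w\<in>V. (w, v) \<in> E"
proof -
  obtain c k where "dominated_coloring V E c k" using assms(1) unfolding dom_colorable_def by blast
  then have "\<forall>i\<in>c ` V. \<exists>w\<in>V. \<forall>v\<in>V. c v = i \<longrightarrow> (w, v) \<in> E"
    unfolding dominated_coloring_def by blast
  then show ?thesis using assms(2) by blast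
qed

lemma star_sub_edge:
  assumes "V' \<subseteq> {0..n}" "V' \<noteq> {}" "dom_colorable V' (starE n \<inter> (V' \<times> V'))"
  shows "0 \<in> V' \<and> (\<exists>i\<in>V'. i \<noteq> 0)"
proof -
  obtain v where v: "v \<in> V'" using assms(2) by blast
  obtain w where "w \<in> V'" "(w, v) \<in> starE n \<inter> (V' \<times> V')" using dc_edge[OF assms(3) v] by blast
  then show ?thesis using v unfolding starE_def by (auto simp: Bex_def)
qed

lemma star_sub_chi:
  assumes "V' \<subseteq> {0..n}" "0 \<in> V'" "i \<in> V'" "i \<noteq> 0"
  shows "dom_colorable V' (starE n \<inter> (V' \<times> V')) \<and> chi_dom V' (starE n \<inter> (V' \<times> V')) = 2"
proof -
  let ?E = "starE n \<inter> (V' \<times> V')"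
  let ?c = "\<lambda>v::nat. if v = 0 then 0::nat else 1"
  have i1: "i \<in> {1..n}" using assms by auto
  have dc: "dominated_coloring V' ?E ?c 2"
    unfolding dominated_coloring_def proper_coloring_def
  proof (intro conjI)
    show "?c ` V' \<subseteq> {..<2}" by auto
    show "\<forall>(u, v)\<in>?E. ?c u \<noteq> ?c v" unfolding starE_def by auto
    show "\<forall>j\<in>?c ` V'. \<exists>w\<in>V'. \<forall>v\<in>V'. ?c v = j \<longrightarrow> (w, v) \<in> ?E"
    proof
      fix j assume "j \<in> ?c ` V'"
      then have "j = 0 \<or> j = 1" by auto
      then show "\<exists>w\<in>V'. \<forall>v\<in>V'. ?c v = j \<longrightarrow> (w, v) \<in> ?E"
      proof
        assume "j = 0"
        then show ?thesis using assms i1 by (intro bexI[of _ i]) (auto simp: starE_def)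
      next
        assume "j = 1"
        then show ?thesis using assms by (intro bexI[of _ 0]) (auto simp: starE_def split: if_splits)
      qed
    qed
  qed
  have "chi_dom V' ?E = 2"
    unfolding chi_dom_def
  proof (rule Least_equality)
    show "\<exists>c. dominated_coloring V' ?E c 2" using dc by blast
  next
    fix k assume "\<exists>c. dominated_coloring V' ?E c k"
    then obtain c where c: "dominated_coloring V' ?E c k" by blast
    have e: "(0, i) \<in> ?E" using assms i1 by (auto simp: starE_def)
    then have "c 0 \<noteq> c i" using c unfolding dominated_coloring_def proper_coloring_def by blast
    moreover have "c 0 < k" "c i < k" using c assms unfolding dominated_coloring_def proper_coloring_def by auto
    ultimately show "2 \<le> k" by linarith
  qed
  then show ?thesis using dc unfolding dom_colorable_def by blast
qed

lemma empty_dc: "dom_colorable {} {} \<and> chi_dom {} {} = 0"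
proof -
  have "dominated_coloring {} {} (\<lambda>_. 0) 0"
    unfolding dominated_coloring_def proper_coloring_def by auto
  moreover then have "chi_dom {} {} = 0" unfolding chi_dom_def by (metis (mono_tags) Least_eq_0)
  ultimately show ?thesis unfolding dom_colorable_def by blast
qed

lemma star_props:
  assumes "n \<ge> 1"
  shows "graph {0..n} (starE n) \<and> dom_colorable {0..n} (starE n) \<and>
         chi_dom {0..n} (starE n) = 2 \<and> St_dom {0..n} (starE n) = n + 1"
proof -
  have EE: "starE n \<inter> ({0..n} \<times> {0..n}) = starE n" unfolding starE_def by auto
  have g: "graph {0..n} (starE n)"
    unfolding graph_def sym_def irrefl_def starE_def by auto
  have ch: "dom_colorable {0..n} (starE n) \<and> chi_dom {0..n} (starE n) = 2"
    using star_sub_chi[of "{0..n}" n 1] assms EE by auto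
  have St: "St_dom {0..n} (starE n) = n + 1"
    unfolding St_dom_def
  proof (rule Least_equality)
    show "\<exists>S\<subseteq>{0..n}. card S = n + 1 \<and>
        dom_colorable ({0..n} - S) (starE n \<inter> (({0..n} - S) \<times> ({0..n} - S))) \<and>
        chi_dom ({0..n} - S) (starE n \<inter> (({0..n} - S) \<times> ({0..n} - S))) \<noteq> chi_dom {0..n} (starE n)"
      proof (intro exI[of _ "{0..n}"] conjI)
      have e: "{0..n} - {0..n} = ({}::nat set)" "starE n \<inter> ({} \<times> {}) = {}" by auto
      show "dom_colorable ({0..n} - {0..n}) (starE n \<inter> (({0..n} - {0..n}) \<times> ({0..n} - {0..n})))"
        unfolding e using empty_dc by blast
      show "chi_dom ({0..n} - {0..n}) (starE n \<inter> (({0..n} - {0..n}) \<times> ({0..n} - {0..n}))) \<noteq> chi_dom {0..n} (starE n)"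
        unfolding e using empty_dc[where 'a=nat] ch by (metis zero_neq_numeral)
    qed auto
  next
    fix m assume "\<exists>S\<subseteq>{0..n}. card S = m \<and>
        dom_colorable ({0..n} - S) (starE n \<inter> (({0..n} - S) \<times> ({0..n} - S))) \<and>
        chi_dom ({0..n} - S) (starE n \<inter> (({0..n} - S) \<times> ({0..n} - S))) \<noteq> chi_dom {0..n} (starE n)"
    then obtain S where S: "S \<subseteq> {0..n}" "card S = m"
      "dom_colorable ({0..n} - S) (starE n \<inter> (({0..n} - S) \<times> ({0..n} - S)))"
      "chi_dom ({0..n} - S) (starE n \<inter> (({0..n} - S) \<times> ({0..n} - S))) \<noteq> 2"
      using ch by auto
    have "{0..n} - S = {}"
    proof (rule ccontr)
      assume ne: "{0..n} - S \<noteq> {}"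
      obtain i where "0 \<in> {0..n} - S" "i \<in> {0..n} - S" "i \<noteq> 0"
        using star_sub_edge[OF _ ne S(3)] by auto
      then show False using star_sub_chi[of "{0..n} - S" n i] S(4) by auto
    qed
    then have "S = {0..n}" using S(1) by auto
    then show "n + 1 \<le> m" using S(2) by simp
  qed
  show ?thesis using g ch St by blast
qed

theorem mainTheorem11:
  fixes N :: nat
  assumes "N > 0"
  shows "\<exists>(VG :: nat set) EG (VH :: nat set) EH.
           graph VG EG \<and> graph VH EH \<and> VG \<noteq> {} \<and> VH \<noteq> {} \<and>
           dom_colorable VG EG \<and> dom_colorable VH EH \<and>
           chi_dom VG EG = chi_dom VH EH \<and>
           \<bar>int (St_dom VG EG) - int (St_dom VH EH)\<bar> \<ge> int N"
proof -
  have G: "graph {0..N+1} (starE (N+1)) \<and> dom_colorable {0..N+1} (starE (N+1)) \<and>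
         chi_dom {0..N+1} (starE (N+1)) = 2 \<and> St_dom {0..N+1} (starE (N+1)) = N + 2"
    using star_props[of "N+1"] by simp
  have H: "graph {0..1} (starE 1) \<and> dom_colorable {0..1} (starE 1) \<and>
         chi_dom {0..1} (starE 1) = 2 \<and> St_dom {0..1} (starE 1) = 2"
    using star_props[of 1] by simp
  show ?thesis
    apply (rule exI[of _ "{0..N+1}"], rule exI[of _ "starE (N+1)"],
           rule exI[of _ "{0..1}"], rule exI[of _ "starE 1"])
    using G H by auto
qed

end
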